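(* There exists a Blaschke product $B$ on $\mathbb D$ such that for every $\varepsilon>0$ there is $c_\varepsilon>0$ with $1-|B(z)|\ge c_\varepsilon(1-|z|)^\varepsilon$ for all $z\in\mathbb D$.
   Context: A Blaschke product is $B(z)=\prod_n\frac{|z_n|}{z_n}\frac{z_n-z}{1-\bar z_nz}$ with $z_n\in\mathbb D\setminus\{0\}$, $\sum_n(1-|z_n|)<\infty$. *)

theory Defs
  imports "HOL-Analysis.Analysis"
begin

definition blaschke_factor :: "complex \<Rightarrow> complex \<Rightarrow> complex" where
  "blaschke_factor a z = (complex_of_real (norm a) / a) * ((a - z) / (1 - cnj a * z))"

definition blaschke_seq :: "(nat \<Rightarrow> complex) \<Rightarrow> bool" where
  "blaschke_seq a \<longleftrightarrow> (\<forall>n. a n \<in> ball 0 1 - {0}) \<and> summable (\<lambda>n. 1 - norm (a n))"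

definition blaschke_product :: "(nat \<Rightarrow> complex) \<Rightarrow> complex \<Rightarrow> complex" where
  "blaschke_product a z = (\<Prod>n. blaschke_factor (a n) z)"

end

theory Submission
  imports Defs "HOL-Real_Asymp.Real_Asymp"
begin
lemma ident:
  fixes a z :: complex
  shows "norm (1 - cnj a * z)^2 - norm (a - z)^2 = (1 - norm a^2) * (1 - norm z^2)"
  unfolding cmod_power2 by (simp add: power2_eq_square algebra_simps)

lemma denom_pos:
  fixes a z :: complex
  assumes "norm a < 1" "norm z < 1"
  shows "norm (1 - cnj a * z) \<ge> 1 - norm z" "1 - cnj a * z \<noteq> 0"
proof -
  have "norm (cnj a * z) \<le> norm z"
    using assms by (simp add: norm_mult mult_left_le_one_le)
  moreover have "norm (1 - cnj a * z) \<ge> 1 - norm (cnj a * z)"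
    by (metis norm_one norm_triangle_ineq2)
  ultimately show "norm (1 - cnj a * z) \<ge> 1 - norm z" by linarith
  then show "1 - cnj a * z \<noteq> 0" using assms by auto
qed

lemma bf_norm:
  fixes a z :: complex
  assumes "a \<noteq> 0"
  shows "norm (blaschke_factor a z) = norm (a - z) / norm (1 - cnj a * z)"
  using assms by (simp add: blaschke_factor_def norm_mult norm_divide)

lemma bf_sq:
  fixes a z :: complex
  assumes "a \<noteq> 0" "norm a < 1" "norm z < 1"
  shows "norm (blaschke_factor a z)^2 = 1 - (1 - norm a^2) * (1 - norm z^2) / norm (1 - cnj a * z)^2"
proof -
  have d: "norm (1 - cnj a * z) > 0" using denom_pos[OF assms(2,3)] by auto
  have "norm (a - z)^2 = norm (1 - cnj a * z)^2 - (1 - norm a^2) * (1 - norm z^2)"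
    using ident[of a z] by linarith
  then show ?thesis using d by (simp add: bf_norm[OF assms(1)] power_divide field_simps)
qed

lemma bf_le1:
  fixes a z :: complex
  assumes "a \<noteq> 0" "norm a < 1" "norm z < 1"
  shows "norm (blaschke_factor a z) \<le> 1"
proof -
  have "(1 - norm a^2) * (1 - norm z^2) / norm (1 - cnj a * z)^2 \<ge> 0"
    using assms by (intro divide_nonneg_nonneg mult_nonneg_nonneg) (auto simp: abs_square_le_1)
  then have "norm (blaschke_factor a z)^2 \<le> 1" using bf_sq[OF assms] by linarith
  then show ?thesis by (simp add: power_le_one_iff abs_square_le_1)
qed

lemma bf_lower:
  fixes a z :: complex
  assumes "a \<noteq> 0" "norm a < 1" "norm z < 1"
  shows "1 - norm (blaschke_factor a z) \<ge> (1 - norm a^2) * (1 - norm z^2) / (2 * norm (1 - cnj a * z)^2)"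
proof -
  define b where "b = norm (blaschke_factor a z)"
  have b0: "0 \<le> b" "b \<le> 1" using bf_le1[OF assms] by (auto simp: b_def)
  have "0 \<le> (1 - b)^2" by simp
  then have "1 - b^2 \<le> 2 * (1 - b)" by (simp add: power2_eq_square algebra_simps)
  moreover have "1 - b^2 = (1 - norm a^2) * (1 - norm z^2) / norm (1 - cnj a * z)^2"
    using bf_sq[OF assms] by (simp add: b_def)
  ultimately show ?thesis unfolding b_def by simp
qed

lemma gen: fixes a q c p :: complex shows "a \<noteq> 0 \<Longrightarrow> q \<noteq> 0 \<Longrightarrow> 1 - (c / a) * (p / q) = (a*q - c*p)/(a*q)"
  by (simp add: field_simps)
lemma num: fixes a z :: complex
  shows "a * (1 - cnj a * z) - of_real (norm a) * (a - z) = of_real (1 - norm a) * (a + of_real (norm a) * z)"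
proof -
  have aa2: "a * cnj a = of_real (norm a) * of_real (norm a)"
    using complex_norm_square[of a] by (simp add: power2_eq_square)
  have "a * (1 - cnj a * z) = a - (a * cnj a) * z" by (simp add: algebra_simps)
  then show ?thesis unfolding aa2 by (simp add: algebra_simps)
qed

lemma bf_one:
  fixes a z :: complex
  assumes "a \<noteq> 0" "norm a < 1" "norm z < 1"
  shows "norm (1 - blaschke_factor a z) \<le> 2 * (1 - norm a) / (1 - norm z)"
proof -
  have d: "1 - cnj a * z \<noteq> 0" and dl: "norm (1 - cnj a * z) \<ge> 1 - norm z"
    using denom_pos[OF assms(2,3)] by auto
  have eq: "1 - blaschke_factor a z = complex_of_real (1 - norm a) * (a + complex_of_real (norm a) * z) / (a * (1 - cnj a * z))"
    unfolding blaschke_factor_def gen[OF assms(1) d] num by (rule refl)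
  have "norm (a + complex_of_real (norm a) * z) \<le> norm a + norm a * norm z"
  proof -
    have "norm (a + complex_of_real (norm a) * z) \<le> norm a + norm (complex_of_real (norm a) * z)"
      by (rule norm_triangle_ineq)
    also have "norm (complex_of_real (norm a) * z) = norm a * norm z"
      by (simp only: norm_mult norm_of_real abs_norm_cancel)
    finally show ?thesis .
  qed
  also have "\<dots> \<le> 2 * norm a" using assms by (simp add: mult_left_le_one_le)
  finally have num: "norm (a + complex_of_real (norm a) * z) \<le> 2 * norm a" .
  have "norm (1 - blaschke_factor a z) = (1 - norm a) * norm (a + complex_of_real (norm a) * z) / (norm a * norm (1 - cnj a * z))"
    using assms unfolding eq norm_divide norm_mult norm_of_real by simp
  also have "\<dots> \<le> (1 - norm a) * (2 * norm a) / (norm a * (1 - norm z))"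
    using assms num dl by (intro frac_le mult_left_mono mult_pos_pos) auto
  also have "\<dots> = 2 * (1 - norm a) / (1 - norm z)" using assms by simp
  finally show ?thesis .
qed
lemma prod_bound:
  assumes a: "blaschke_seq a" and z: "norm z < 1"
  shows "norm (blaschke_product a z) \<le> norm (blaschke_factor (a n) z)"
proof -
  let ?f = "\<lambda>m. blaschke_factor (a m) z"
  have an: "a m \<noteq> 0" "norm (a m) < 1" for m using a unfolding blaschke_seq_def by auto
  have sa: "summable (\<lambda>m. 1 - norm (a m))" using a unfolding blaschke_seq_def by auto
  have "summable (\<lambda>m. norm (?f m - 1))"
  proof (rule summable_comparison_test')
    show "summable (\<lambda>m. (2 / (1 - norm z)) * (1 - norm (a m)))"
      using sa by (rule summable_mult)
    fix m :: nat assume "m \<ge> 0"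
    have "norm (norm (?f m - 1)) = norm (1 - ?f m)" by (simp only: real_norm_def abs_norm_cancel norm_minus_commute)
    also have "\<dots> \<le> 2 * (1 - norm (a m)) / (1 - norm z)" by (rule bf_one[OF an z])
    finally show "norm (norm (?f m - 1)) \<le> (2 / (1 - norm z)) * (1 - norm (a m))" by simp
  qed
  then have "convergent_prod ?f"
    by (intro abs_convergent_prod_imp_convergent_prod summable_imp_abs_convergent_prod)
  then have "(\<lambda>N. \<Prod>i\<le>N. ?f i) \<longlonglongrightarrow> prodinf ?f" by (rule convergent_prod_LIMSEQ)
  then have lim: "(\<lambda>N. norm (\<Prod>i\<le>N. ?f i)) \<longlonglongrightarrow> norm (blaschke_product a z)"
    unfolding blaschke_product_def by (rule tendsto_norm)
  show ?thesis
  proof (rule LIMSEQ_le_const2[OF lim], intro exI allI impI)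
    fix N assume "N \<ge> n"
    then have "n \<in> {..N}" by simp
    then have "norm (\<Prod>i\<le>N. ?f i) = norm (?f n) * (\<Prod>i\<in>{..N}-{n}. norm (?f i))"
      by (simp add: prod.remove norm_mult flip: prod_norm)
    also have "\<dots> \<le> norm (?f n) * 1"
      by (intro mult_left_mono prod_le_1) (auto intro: bf_le1[OF an z])
    finally show "norm (\<Prod>i\<le>N. ?f i) \<le> norm (?f n)" by simp
  qed
qed

definition dl :: "nat \<Rightarrow> real" where "dl k = 1 / (2^k * (real k + 2)^2)"

definition zs :: "nat \<Rightarrow> complex" where
  "zs n = complex_of_real (1 - dl (floor_log n)) * exp (2 * of_real pi * \<i> * of_nat n / 2 ^ floor_log n)"

lemma dl_pos: "dl k > 0" by (simp add: dl_def)

lemma dl_le: "dl k \<le> 1 / (4 * 2^k)"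
proof -
  have "4 * 2^k \<le> (2::real)^k * (real k + 2)^2"
    by (simp add: power2_eq_square algebra_simps)
  then show ?thesis unfolding dl_def by (intro divide_left_mono) auto
qed

lemma dl_mono: "m \<le> n \<Longrightarrow> dl n \<le> dl m"
  unfolding dl_def by (intro divide_left_mono mult_mono power_increasing power_mono) auto

lemma norm_zs: "norm (zs n) = 1 - dl (floor_log n)"
proof -
  have "dl (floor_log n) \<le> 1" using dl_le[of "floor_log n"]
    by (smt (verit) divide_le_eq_1 one_le_power)
  then show ?thesis unfolding zs_def norm_mult norm_of_real by (simp add: norm_divide)
qed

lemma seq_zs: "blaschke_seq zs"
  unfolding blaschke_seq_def
proof (intro conjI allI)
  fix n
  have "dl (floor_log n) \<le> 1/4" using dl_le[of "floor_log n"]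
    by (smt (verit) divide_left_mono mult_le_cancel_left1 one_le_power)
  then show "zs n \<in> ball 0 1 - {0}" using norm_zs[of n] dl_pos[of "floor_log n"]
    by (auto simp: dist_norm)
next
  have "summable (\<lambda>n. dl (floor_log n))"
  proof (subst condensation_test)
    show "dl (floor_log (Suc m)) \<le> dl (floor_log m)" for m
      by (intro dl_mono floor_log_le_iff) simp
    show "dl (floor_log n) \<ge> 0" for n using dl_pos[of "floor_log n"] by simp
    have "summable (\<lambda>n. inverse (real n ^ 2))" by (rule inverse_power_summable) simp
    then have "summable (\<lambda>n. inverse (real (n + 2) ^ 2))"
      by (rule summable_ignore_initial_segment)
    then show "summable (\<lambda>n. 2 ^ n * dl (floor_log (2 ^ n)))"
      by (simp add: dl_def field_simps)
  qed
  then show "summable (\<lambda>n. 1 - norm (zs n))" by (simp add: norm_zs)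
qed

lemma hbound: fixes e :: real assumes "e > 0"
  shows "\<exists>M>0. \<forall>k::nat. (real k + 2)^2 * 2 powr (- e * real k) \<le> M"
proof -
  have "(\<lambda>k::nat. (real k + 2)^2 * 2 powr (- e * real k)) \<longlonglongrightarrow> 0"
    using assms by real_asymp
  then have "Bseq (\<lambda>k::nat. (real k + 2)^2 * 2 powr (- e * real k))"
    by (rule convergent_imp_Bseq[OF convergentI])
  then obtain M where "M > 0" "\<And>k. norm ((real k + 2)^2 * 2 powr (- e * real k)) \<le> M"
    by (auto elim: BseqE)
  then show ?thesis by (intro exI[of _ M]) (auto simp: abs_le_iff)
qed

lemma pick_k: fixes t :: real assumes "0 < t" "t \<le> 1"
  shows "\<exists>k::nat. 1 / 2^(k+1) < t \<and> t \<le> 1 / 2^k"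
proof -
  define x where "x = 1 / t"
  have x1: "x \<ge> 1" and x0: "x > 0" using assms by (auto simp: x_def)
  have lx: "0 \<le> log 2 x" using x1 by simp
  define k where "k = nat \<lfloor>log 2 x\<rfloor>"
  have rk: "real k = of_int \<lfloor>log 2 x\<rfloor>" using lx by (simp add: k_def)
  have k1: "real k \<le> log 2 x" using rk by linarith
  have k2: "log 2 x < real k + 1" using rk by linarith
  have "2 powr real k \<le> x" using k1 x0 by (simp add: le_log_iff)
  then have a: "2^k \<le> x" by (simp add: powr_realpow)
  have "x < 2 powr (real k + 1)" using k2 x0 by (simp add: log_less_iff)
  then have b: "x < 2^(k+1)" by (metis of_nat_Suc powr_realpow zero_less_numeral Suc_eq_plus1 add.commute)
  have "t \<le> 1 / 2^k" using a assms x0 unfolding x_def by (simp add: field_simps)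
  moreover have "1 / 2^(k+1) < t" using b assms unfolding x_def by (simp add: field_simps)
  ultimately show ?thesis by blast
qed

lemma exp_diff_le: "norm (exp (\<i> * of_real x) - exp (\<i> * of_real y)) \<le> \<bar>x - y\<bar>"
proof -
  have e: "exp (\<i> * of_real x) - exp (\<i> * of_real y) = exp (\<i> * of_real y) * (exp (\<i> * of_real (x - y)) - 1)"
    by (simp add: algebra_simps flip: exp_add)
  have h: "norm (exp (\<i> * of_real (x - y)) - 1) = 2 * \<bar>sin ((x - y) / 2)\<bar>"
    by (rule dist_exp_i_1)
  have "norm (exp (\<i> * of_real x) - exp (\<i> * of_real y)) = norm (exp (\<i> * of_real y)) * norm (exp (\<i> * of_real (x - y)) - 1)"
    by (subst e) (rule norm_mult)
  also have "\<dots> = 2 * \<bar>sin ((x - y) / 2)\<bar>" by (simp only: h norm_exp_i_times mult_1)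
  also have "\<dots> \<le> 2 * \<bar>(x - y) / 2\<bar>" using abs_sin_x_le_abs_x[of "(x - y) / 2"] by simp
  finally show ?thesis by simp
qed

lemma cover:
  assumes z: "norm z < 1"
  shows "\<exists>n k. 1 / 2^(k+1) < 1 - norm z \<and> 1 - norm z \<le> 1 / 2^k \<and> floor_log n = k \<and> norm (zs n - z) \<le> 9 / 2^k"
proof -
  define t where "t = 1 - norm z"
  have t: "0 < t" "t \<le> 1" using z by (auto simp: t_def)
  obtain k :: nat where k: "1 / 2^(k+1) < t" "t \<le> 1 / 2^k" using pick_k[OF t] by blast
  define N :: nat where "N = 2^k"
  have Npos: "N > 0" by (simp add: N_def)
  have rN: "real N = 2^k" by (simp add: N_def)
  define \<phi> where "\<phi> = Arg z"
  define j where "j = \<lfloor>real N * \<phi> / (2 * pi)\<rfloor>"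
  define \<psi> where "\<psi> = 2 * pi * of_int j / real N"
  have j1: "of_int j \<le> real N * \<phi> / (2 * pi)" and j2: "real N * \<phi> / (2 * pi) < of_int j + 1"
    unfolding j_def by linarith+
  have "\<psi> \<le> \<phi>" using j1 Npos pi_gt_zero unfolding \<psi>_def by (simp add: field_simps)
  moreover have "\<phi> < \<psi> + 2 * pi / real N" using j2 Npos pi_gt_zero unfolding \<psi>_def by (simp add: field_simps)
  ultimately have ang: "\<bar>\<phi> - \<psi>\<bar> \<le> 2 * pi / 2^k" using rN by simp
  define n where "n = N + nat (j mod int N)"
  have jm: "0 \<le> j mod int N" "j mod int N < int N" using Npos by simp_all
  have n1: "2^k \<le> n" and n2: "n < 2 * 2^k" using jm unfolding n_def N_def by linarith+
  have fl: "floor_log n = k" using n1 n2 by (intro floor_log_eqI) auto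
  have rn: "real n = of_int j + real N * of_int (1 - j div int N)"
  proof -
    have "int n = int N + j mod int N" using jm by (simp add: n_def)
    also have "j mod int N = j - int N * (j div int N)" by (simp add: minus_div_mult_eq_mod [symmetric] algebra_simps)
    finally have "int n = j + int N * (1 - j div int N)" by (simp add: algebra_simps)
    then have "real_of_int (int n) = real_of_int (j + int N * (1 - j div int N))" by simp
    then show ?thesis by simp
  qed
  have ex: "exp (2 * of_real pi * \<i> * of_nat n / 2 ^ k) = exp (\<i> * of_real \<psi>)"
  proof -
    define m where "m = 1 - j div int N"
    have "2 * of_real pi * \<i> * of_nat n / 2 ^ k = \<i> * of_real \<psi> + (2 * of_int m * pi) * \<i>"
    proof -
      have "(of_nat n :: complex) = of_real (real n)" by simp
      also have "\<dots> = of_int j + of_nat N * of_int m" unfolding rn m_def by simp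
      finally have "(of_nat n :: complex) = of_int j + of_nat N * of_int m" .
      then show ?thesis unfolding \<psi>_def using Npos
        by (simp add: field_simps N_def)
    qed
    then have "exp (2 * of_real pi * \<i> * of_nat n / 2 ^ k) = exp (\<i> * of_real \<psi>) * exp ((2 * of_int m * pi) * \<i>)"
      by (simp add: exp_add)
    also have "exp ((2 * of_int m * pi) * \<i>) = 1" by (rule exp_integer_2pi) simp
    finally show ?thesis by simp
  qed
  define r where "r = 1 - dl k"
  have zsn: "zs n = of_real r * exp (\<i> * of_real \<psi>)"
    unfolding zs_def fl r_def ex by simp
  define s where "s = norm z"
  have zz: "z = of_real s * exp (\<i> * of_real \<phi>)"
    unfolding \<phi>_def s_def by (cases "z = 0") (simp, rule Arg_eq)
  have dk: "0 < dl k" "dl k \<le> 1 / 2^k" using dl_pos[of k] dl_le[of k] by (auto simp: field_simps)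
  have s0: "s \<ge> 0" by (simp add: s_def)
  have eq: "zs n - z = of_real (r - s) * exp (\<i> * of_real \<psi>) + of_real s * (exp (\<i> * of_real \<psi>) - exp (\<i> * of_real \<phi>))"
    using zsn zz by (simp add: algebra_simps)
  have "norm (zs n - z) \<le> norm (of_real (r - s) * exp (\<i> * of_real \<psi>)) + norm (of_real s * (exp (\<i> * of_real \<psi>) - exp (\<i> * of_real \<phi>)))"
    unfolding eq by (rule norm_triangle_ineq)
  also have "\<dots> = \<bar>r - s\<bar> + s * norm (exp (\<i> * of_real \<psi>) - exp (\<i> * of_real \<phi>))"
    using s0 by (simp only: norm_mult norm_of_real norm_exp_i_times mult_1_right real_norm_def abs_of_nonneg)
  also have "\<dots> \<le> \<bar>r - s\<bar> + s * \<bar>\<psi> - \<phi>\<bar>"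
    using s0 by (intro add_left_mono mult_left_mono exp_diff_le)
  also have "\<dots> \<le> 1 / 2^k + 1 * (2 * pi / 2^k)"
  proof (rule add_mono)
    show "\<bar>r - s\<bar> \<le> 1 / 2^k" using dk k t unfolding r_def t_def s_def by linarith
    show "s * \<bar>\<psi> - \<phi>\<bar> \<le> 1 * (2 * pi / 2^k)"
      using ang z unfolding s_def by (intro mult_mono) auto
  qed
  also have "\<dots> \<le> 9 / 2^k" using pi_less_4 by (simp add: field_simps)
  finally show ?thesis using k fl unfolding t_def by blast
qed

lemma arith_id0:
  fixes P Q :: real assumes "P > 0" "Q > 0"
  shows "1 / (484 * Q) = ((1 / (P * Q)) * (1 / (P * 2))) / (2 * (11 / P)^2)"
  using assms by (simp add: field_simps power2_eq_square)

lemma arith_id: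
  fixes P x :: real assumes "P > 0" "x \<ge> 0"
  shows "1 / (484 * (x + 2)^2) = ((1 / (P * (x + 2)^2)) * (1 / (P * 2))) / (2 * (11 / P)^2)"
proof -
  have "(x + 2)^2 > 0" using assms by simp
  then show ?thesis using arith_id0[OF assms(1)] by blast
qed

lemma key:
  assumes z: "norm z < 1"
  shows "\<exists>k::nat. 1 - norm z \<le> 1 / 2^k \<and> 1 / (484 * (real k + 2)^2) \<le> 1 - norm (blaschke_product zs z)"
proof -
  obtain n k where k1: "1 / 2^(k+1) < 1 - norm z" and k2: "1 - norm z \<le> 1 / 2^k"
    and fl: "floor_log n = k" and close: "norm (zs n - z) \<le> 9 / 2^k"
    using cover[OF z] by blast
  define a where "a = zs n"
  have an: "a \<noteq> 0" "norm a < 1" using seq_zs unfolding blaschke_seq_def a_def by auto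
  have na: "norm a = 1 - dl k" using norm_zs[of n] fl by (simp add: a_def)
  define D where "D = norm (1 - cnj a * z)"
  have Dpos: "D > 0" using denom_pos[OF an(2) z] by (simp add: D_def)
  have "1 - cnj a * z = (1 - cnj z * z) + (cnj z - cnj a) * z" by (simp add: algebra_simps)
  moreover have "cnj z * z = of_real (norm z ^ 2)" by (metis complex_norm_square mult.commute of_real_power)
  ultimately have "1 - cnj a * z = of_real (1 - norm z ^ 2) + cnj (z - a) * z" by simp
  then have "D \<le> norm (of_real (1 - norm z ^ 2) :: complex) + norm (cnj (z - a) * z)"
    unfolding D_def by (metis norm_triangle_ineq)
  also have "\<dots> = \<bar>1 - norm z ^ 2\<bar> + norm (z - a) * norm z"
    by (simp only: norm_mult complex_mod_cnj norm_of_real)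
  also have "\<dots> \<le> 2 / 2^k + 9 / 2^k * 1"
  proof (rule add_mono)
    have "1 - norm z ^ 2 = (1 - norm z) * (1 + norm z)" by (simp add: algebra_simps power2_eq_square)
    also have "\<dots> \<le> (1 / 2^k) * 2" using k2 z by (intro mult_mono) auto
    finally show "\<bar>1 - norm z ^ 2\<bar> \<le> 2 / 2^k" using z by (simp add: abs_square_le_1 abs_le_iff power_le_one)
    have "norm (z - a) \<le> 9 / 2^k" using close by (simp add: a_def norm_minus_commute)
    then show "norm (z - a) * norm z \<le> 9 / 2^k * 1" using z by (intro mult_mono) auto
  qed
  finally have Dle: "D \<le> 11 / 2^k" by simp
  have A: "1 - norm a ^ 2 \<ge> dl k"
  proof -
    have "1 - norm a ^ 2 = (1 - norm a) * (1 + norm a)" by (simp add: algebra_simps power2_eq_square)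
    also have "\<dots> \<ge> (1 - norm a) * 1" using an by (intro mult_left_mono) auto
    finally show ?thesis using na by simp
  qed
  have Z: "1 - norm z ^ 2 \<ge> 1 / 2^(k+1)"
  proof -
    have "1 - norm z ^ 2 = (1 - norm z) * (1 + norm z)" by (simp add: algebra_simps power2_eq_square)
    also have "\<dots> \<ge> (1 - norm z) * 1" using z by (intro mult_left_mono) auto
    finally show ?thesis using k1 by simp
  qed
  have "1 / (484 * (real k + 2)^2) = (dl k * (1 / 2^(k+1))) / (2 * (11 / 2^k)^2)"
    using arith_id[of "2^k" "real k"] by (simp add: dl_def)
  also have "\<dots> \<le> ((1 - norm a ^ 2) * (1 - norm z ^ 2)) / (2 * D^2)"
    using A Z Dpos Dle dl_pos[of k]
    by (intro frac_le mult_mono mult_pos_pos mult_left_mono power_mono) auto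
  also have "\<dots> \<le> 1 - norm (blaschke_factor a z)"
    using bf_lower[OF an z] by (simp add: D_def)
  also have "\<dots> \<le> 1 - norm (blaschke_product zs z)"
    using prod_bound[OF seq_zs z, of n] by (simp add: a_def)
  finally show ?thesis using k2 by blast
qed

theorem mainTheorem18:
  shows "\<exists>a. blaschke_seq a \<and>
           (\<forall>\<epsilon>::real. \<epsilon> > 0 \<longrightarrow> (\<exists>c::real. c > 0 \<and>
              (\<forall>z\<in>ball (0::complex) 1.
                 1 - norm (blaschke_product a z) \<ge> c * (1 - norm z) powr \<epsilon>)))"
proof (rule exI[of _ zs], intro conjI allI impI)
  show "blaschke_seq zs" by (rule seq_zs)
  fix e :: real assume e: "e > 0"
  obtain M where M: "M > 0" "\<And>k::nat. (real k + 2)^2 * 2 powr (- e * real k) \<le> M"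
    using hbound[OF e] by blast
  show "\<exists>c>0. \<forall>z\<in>ball 0 1. c * (1 - norm z) powr e \<le> 1 - norm (blaschke_product zs z)"
  proof (intro exI conjI ballI)
    show "1 / (484 * M) > 0" using M by simp
    fix z :: complex assume "z \<in> ball 0 1"
    then have z: "norm z < 1" by simp
    obtain k where k: "1 - norm z \<le> 1 / 2^k"
      and lb: "1 / (484 * (real k + 2)^2) \<le> 1 - norm (blaschke_product zs z)"
      using key[OF z] by blast
    have p: "(1 / 2^k :: real) = 2 powr (- real k)" by (simp add: powr_minus_divide powr_realpow)
    have "(1 - norm z) powr e \<le> (1 / 2^k) powr e"
      using k z e by (intro powr_mono2) auto
    also have "\<dots> = 2 powr (- e * real k)" unfolding p by (simp add: powr_powr mult.commute)
    finally have t: "(1 - norm z) powr e \<le> 2 powr (- e * real k)" .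
    define h where "h = (real k + 2)^2 * 2 powr (- e * real k)"
    have hpos: "h > 0" by (simp add: h_def)
    have "1 / (484 * M) * (1 - norm z) powr e \<le> 1 / (484 * M) * 2 powr (- e * real k)"
      using t M by (intro mult_left_mono) auto
    also have "\<dots> \<le> 1 / (484 * h) * 2 powr (- e * real k)"
      using M(2)[of k] M(1) hpos by (intro mult_right_mono divide_left_mono mult_pos_pos) (auto simp: h_def)
    also have "\<dots> = 1 / (484 * (real k + 2)^2)" unfolding h_def by (simp add: field_simps)
    also have "\<dots> \<le> 1 - norm (blaschke_product zs z)" by (rule lb)
    finally show "1 / (484 * M) * (1 - norm z) powr e \<le> 1 - norm (blaschke_product zs z)" .
  qed
qed
end
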